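(* Let $x^0, x^1, x^2, \ldots \in \mathbb{R}^m$ be a sequence of vectors and suppose there is a constant $B>0$ with $\|x^n\|_2^2 \le B$ for every $n$. For each $n\ge 1$ let $X^{n-1}\in\mathbb{R}^{n\times m}$ be the matrix whose rows are $(x^0)^T,\ldots,(x^{n-1})^T$. Suppose that for some (large enough) $N'$ the matrix $X^{N'-1}$ satisfies the sparse Riesz condition $\mathrm{SRC}(r,c_*,c^* )$. Let $c>1$ be a constant. Then for every integer $n'$ with $N'<n'\le cN'$, the matrix $X^{n'-1}$ satisfies $\mathrm{SRC}(r, c_*/c, \max(c^*,B))$.
   Context: The coordinate index set $\{1,\ldots,m\}$ is partitioned into nonoverlapping groups $\mathcal{G}_1,\ldots,\mathcal{G}_p$ with $d_j=|\mathcal{G}_j|$. For a set $\mathcal{S}\subset\{1,\ldots,p\}$ of group indices, $X_{*\mathcal{S}}$ denotes the submatrix of $X$ formed by the columns indexed by $\bigcup_{j\in\mathcal{S}}\mathcal{G}_j$. A matrix $X^{n-1}$ with $n$ rows satisfies the sparse Riesz condition $\mathrm{SRC}(r,c_*,c^* )$, where $0<c_*<c^*<\infty$, if for every $\mathcal{S}\subset\{1,\ldots,p\}$ with $|\mathcal{S}|=r$ and every $\nu\in\mathbb{R}^{\sum_{j\in\mathcal{S}}d_j}$, $c_*\|\nu\|_2^2\le \|X^{n-1}_{*\mathcal{S}}\nu\|_2^2/n\le c^*\|\nu\|_2^2$. *)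

theory Defs
  imports Complex_Main
begin

text \<open>Vectors x^i in R^m are represented as functions nat => real, coordinates indexed by {1..m}.
  Groups are G 1, ..., G p (subsets of coordinate indices).\<close>

definition group_partition :: "nat \<Rightarrow> nat \<Rightarrow> (nat \<Rightarrow> nat set) \<Rightarrow> bool" where
  "group_partition m p G \<longleftrightarrow>
     (\<Union>j\<in>{1..p}. G j) = {1..m} \<and>
     (\<forall>j\<in>{1..p}. G j \<noteq> {}) \<and>
     (\<forall>j\<in>{1..p}. \<forall>l\<in>{1..p}. j \<noteq> l \<longrightarrow> G j \<inter> G l = {})"

text \<open>SRC_rows x n G p r cl cu: the n x m matrix X^{n-1} with rows x 0, ..., x (n-1)
  satisfies the sparse Riesz condition SRC(r, cl, cu) with respect to groups G 1..G p.
  A vector nu in R^{sum_{j in S} d_j} is a function on the coordinate set U = union of G j, j in S.\<close>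

definition SRC_rows :: "(nat \<Rightarrow> nat \<Rightarrow> real) \<Rightarrow> nat \<Rightarrow> (nat \<Rightarrow> nat set) \<Rightarrow> nat \<Rightarrow> nat
    \<Rightarrow> real \<Rightarrow> real \<Rightarrow> bool" where
  "SRC_rows x n G p r cl cu \<longleftrightarrow> 0 < cl \<and> cl < cu \<and>
     (\<forall>S. S \<subseteq> {1..p} \<longrightarrow> card S = r \<longrightarrow>
        (\<forall>\<nu> :: nat \<Rightarrow> real.
           cl * (\<Sum>k\<in>(\<Union>j\<in>S. G j). (\<nu> k)\<^sup>2)
             \<le> (\<Sum>i<n. (\<Sum>k\<in>(\<Union>j\<in>S. G j). x i k * \<nu> k)\<^sup>2) / real n \<and>
           (\<Sum>i<n. (\<Sum>k\<in>(\<Union>j\<in>S. G j). x i k * \<nu> k)\<^sup>2) / real n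
             \<le> cu * (\<Sum>k\<in>(\<Union>j\<in>S. G j). (\<nu> k)\<^sup>2)))"

end

theory Submission
  imports Defs "HOL-Analysis.Analysis"
begin

theorem proposition2:
  fixes x :: "nat \<Rightarrow> nat \<Rightarrow> real" and m p r N' :: nat and G :: "nat \<Rightarrow> nat set"
    and B cl cu c :: real
  assumes "group_partition m p G"
    and "B > 0"
    and "\<And>n. (\<Sum>k=1..m. (x n k)\<^sup>2) \<le> B"
    and "N' \<ge> 1"
    and "SRC_rows x N' G p r cl cu"
    and "c > 1"
  shows "\<forall>n'::nat. N' < n' \<and> real n' \<le> c * real N' \<longrightarrow>
           SRC_rows x n' G p r (cl / c) (max cu B)"
proof (intro allI impI)
  fix n' :: nat assume n': "N' < n' \<and> real n' \<le> c * real N'"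
  have cl: "0 < cl" "cl < cu" using assms(5) unfolding SRC_rows_def by auto
  have src: "\<And>S \<nu>. S \<subseteq> {1..p} \<Longrightarrow> card S = r \<Longrightarrow>
     cl * (\<Sum>k\<in>(\<Union>j\<in>S. G j). (\<nu> k)\<^sup>2)
             \<le> (\<Sum>i<N'. (\<Sum>k\<in>(\<Union>j\<in>S. G j). x i k * \<nu> k)\<^sup>2) / real N' \<and>
           (\<Sum>i<N'. (\<Sum>k\<in>(\<Union>j\<in>S. G j). x i k * \<nu> k)\<^sup>2) / real N'
             \<le> cu * (\<Sum>k\<in>(\<Union>j\<in>S. G j). (\<nu> k)\<^sup>2)"
    using assms(5) unfolding SRC_rows_def by blast
  have N'pos: "real N' > 0" using assms(4) by simp
  have n'pos: "real n' > 0" using n' by simp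
  show "SRC_rows x n' G p r (cl / c) (max cu B)"
    unfolding SRC_rows_def
  proof (intro conjI allI impI)
    show "0 < cl / c" using cl assms(6) by simp
    have "cl / c < cl" using cl assms(6) by (simp add: divide_less_eq)
    then show "cl / c < max cu B" using cl by linarith
    fix S :: "nat set" and \<nu> :: "nat \<Rightarrow> real"
    assume S: "S \<subseteq> {1..p}" "card S = r"
    define U where "U = (\<Union>j\<in>S. G j)"
    have Usub: "U \<subseteq> {1..m}" using assms(1) S(1) unfolding group_partition_def U_def by blast
    define Q where "Q = (\<Sum>k\<in>U. (\<nu> k)\<^sup>2)"
    define f where "f i = (\<Sum>k\<in>U. x i k * \<nu> k)\<^sup>2" for i
    have Q0: "Q \<ge> 0" unfolding Q_def by (simp add: sum_nonneg)
    have f0: "f i \<ge> 0" for i unfolding f_def by simp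
    have fB: "f i \<le> B * Q" for i
    proof -
      have "f i \<le> (\<Sum>k\<in>U. (x i k)\<^sup>2) * Q"
        unfolding f_def Q_def by (rule Cauchy_Schwarz_ineq_sum)
      also have "(\<Sum>k\<in>U. (x i k)\<^sup>2) \<le> (\<Sum>k=1..m. (x i k)\<^sup>2)"
        by (rule sum_mono2[OF _ Usub]) auto
      then have "(\<Sum>k\<in>U. (x i k)\<^sup>2) * Q \<le> B * Q"
        using assms(3)[of i] Q0 by (meson dual_order.trans mult_right_mono)
      finally show ?thesis .
    qed
    have srcU: "cl * Q \<le> (\<Sum>i<N'. f i) / real N'" "(\<Sum>i<N'. f i) / real N' \<le> cu * Q"
      using src[OF S, of \<nu>] unfolding f_def Q_def U_def by auto
    have split: "(\<Sum>i<n'. f i) = (\<Sum>i<N'. f i) + (\<Sum>i\<in>{N'..<n'}. f i)"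
    proof -
      have "{..<n'} = {..<N'} \<union> {N'..<n'}" using n' by auto
      then show ?thesis by (simp add: sum.union_disjoint ivl_disj_int)
    qed
    have low1: "cl * Q * real N' \<le> (\<Sum>i<N'. f i)" using srcU(1) N'pos by (simp add: le_divide_eq)
    have up1: "(\<Sum>i<N'. f i) \<le> cu * Q * real N'" using srcU(2) N'pos by (simp add: divide_le_eq)
    have rest0: "(\<Sum>i\<in>{N'..<n'}. f i) \<ge> 0" by (simp add: sum_nonneg f0)
    have restB: "(\<Sum>i\<in>{N'..<n'}. f i) \<le> real (n' - N') * (B * Q)"
      using sum_bounded_above[of "{N'..<n'}" f "B*Q"] fB by simp
    have "cl / c * Q * real n' \<le> cl * Q * real N'"
    proof -
      have "real n' / c \<le> real N'" using n' assms(6) by (simp add: divide_le_eq mult.commute)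
      then have "cl * Q * (real n' / c) \<le> cl * Q * real N'"
        using cl Q0 by (intro mult_left_mono) auto
      then show ?thesis by (simp add: field_simps)
    qed
    then have "cl / c * Q * real n' \<le> (\<Sum>i<n'. f i)" using low1 split rest0 by linarith
    then show "cl / c * (\<Sum>k\<in>(\<Union>j\<in>S. G j). (\<nu> k)\<^sup>2)
         \<le> (\<Sum>i<n'. (\<Sum>k\<in>(\<Union>j\<in>S. G j). x i k * \<nu> k)\<^sup>2) / real n'"
      using n'pos unfolding f_def Q_def U_def by (simp add: le_divide_eq)
    have "cu * Q * real N' \<le> max cu B * Q * real N'"
      using Q0 N'pos by (intro mult_right_mono) (auto intro: mult_right_mono)
    moreover have "real (n' - N') * (B * Q) \<le> real (n' - N') * (max cu B * Q)"
      using Q0 by (intro mult_left_mono mult_right_mono) auto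
    moreover have "real (n' - N') = real n' - real N'" using n' by simp
    ultimately have "(\<Sum>i<n'. f i) \<le> max cu B * Q * real n'"
      using split up1 restB by (simp add: algebra_simps)
    then show "(\<Sum>i<n'. (\<Sum>k\<in>(\<Union>j\<in>S. G j). x i k * \<nu> k)\<^sup>2) / real n'
         \<le> max cu B * (\<Sum>k\<in>(\<Union>j\<in>S. G j). (\<nu> k)\<^sup>2)"
      using n'pos unfolding f_def Q_def U_def by (simp add: divide_le_eq)
  qed
qed

end
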